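(* Let $V=\{1,\dots,n\}$ be partitioned into $P_1,\dots,P_J$. For each realization $z$ let $r_{i,z}\in[0,1]$, $i\in V$, with $\sum_{i}r_{i,z}=1$, and let $f_z(\mathbf{x})=\sum_{j=1}^J h\big(\sum_{i\in P_j}r_{i,z}x_i\big)$ for $\mathbf{x}\in\{0,1\}^n$, with $h(s)=\log(1+s)$. Let $\hat h^L(s)=\sum_{\ell=0}^L\frac{h^{(\ell)}(1/2)}{\ell!}(s-1/2)^\ell$ and $\hat f_z^L(\mathbf{x})=\sum_{j=1}^J\hat h^L\big(\sum_{i\in P_j}r_{i,z}x_i\big)$. Let $G_z$ be the multilinear relaxation of $f_z$ and $\widehat{\nabla G_z^L}$ the polynomial estimator built from $\hat f_z^L$. Then for all $\mathbf{y}\in[0,1]^n$, $$\big\|\nabla G_z(\mathbf{y})-\widehat{\nabla G_z^L}(\mathbf{y})\big\|_2\le\frac{\sqrt n}{(L+1)2^L}.$$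
   Context: $G_z(\mathbf{y})=\mathbb{E}_{\mathbf{x}\sim\mathbf{y}}[f_z(\mathbf{x})]$ where $\mathbf{x}\sim\mathbf{y}$ has independent Bernoulli$(y_i)$ coordinates. For a polynomial $p(\mathbf{y})=c_0+\sum_\ell c_\ell\prod_{i\in J_\ell}y_i^{k_i^\ell}$ ($k_i^\ell\ge1$), its multilinearization is $\dot p(\mathbf{y})=c_0+\sum_\ell c_\ell\prod_{i\in J_\ell}y_i$. The polynomial estimator is $\big(\widehat{\nabla G_z^L}(\mathbf{y})\big)_i=\dot{\hat f}{}_z^L([\mathbf{y}]_{+i})-\dot{\hat f}{}_z^L([\mathbf{y}]_{-i})$, where $[\mathbf{y}]_{+i}$, $[\mathbf{y}]_{-i}$ denote $\mathbf{y}$ with coordinate $i$ set to $1$, $0$. *)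

theory Defs
  imports "HOL-Analysis.Analysis" "HOL-Library.Poly_Mapping"
begin

text \<open>Multivariate real polynomials in variables x_i (i :: nat), represented as
  finitely supported maps from monomials (exponent vectors) to coefficients.\<close>
type_synonym mpoly = "(nat \<Rightarrow>\<^sub>0 nat) \<Rightarrow>\<^sub>0 real"

definition mp_const :: "real \<Rightarrow> mpoly" where
  "mp_const c = Poly_Mapping.single 0 c"

definition mp_var :: "nat \<Rightarrow> mpoly" where
  "mp_var i = Poly_Mapping.single (Poly_Mapping.single i 1) 1"

text \<open>Evaluation of the multilinearization: every monomial prod_i x_i^(k_i) with
  k_i >= 1 for i in its support is replaced by prod_{i in support} y_i.\<close>
definition multilin_eval :: "mpoly \<Rightarrow> (nat \<Rightarrow> real) \<Rightarrow> real" where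
  "multilin_eval p y = (\<Sum>m\<in>Poly_Mapping.keys p. Poly_Mapping.lookup p m * (\<Prod>i\<in>Poly_Mapping.keys m. y i))"

definition h :: "real \<Rightarrow> real" where
  "h s = ln (1 + s)"

definition taylor_coeff :: "nat \<Rightarrow> real" where
  "taylor_coeff l = (deriv ^^ l) h (1/2) / fact l"

definition h_hat :: "nat \<Rightarrow> real \<Rightarrow> real" where
  "h_hat L s = (\<Sum>l = 0..L. taylor_coeff l * (s - 1/2) ^ l)"

definition f_obj :: "nat \<Rightarrow> (nat \<Rightarrow> nat set) \<Rightarrow> (nat \<Rightarrow> real) \<Rightarrow> (nat \<Rightarrow> real) \<Rightarrow> real" where
  "f_obj J P r x = (\<Sum>j = 1..J. h (\<Sum>i\<in>P j. r i * x i))"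

definition f_hat_poly :: "nat \<Rightarrow> nat \<Rightarrow> (nat \<Rightarrow> nat set) \<Rightarrow> (nat \<Rightarrow> real) \<Rightarrow> mpoly" where
  "f_hat_poly L J P r = (\<Sum>j = 1..J. \<Sum>l = 0..L.
      mp_const (taylor_coeff l) *
      ((\<Sum>i\<in>P j. mp_const (r i) * mp_var i) - mp_const (1/2)) ^ l)"

text \<open>Multilinear relaxation G(y) = E_{x ~ y}[f(x)], x with independent Bernoulli(y_i)
  coordinates, i in V; x is encoded by the set S of coordinates equal to 1.\<close>
definition multilinear_relaxation ::
  "nat set \<Rightarrow> ((nat \<Rightarrow> real) \<Rightarrow> real) \<Rightarrow> (nat \<Rightarrow> real) \<Rightarrow> real" where
  "multilinear_relaxation V f y =
     (\<Sum>S\<in>Pow V. (\<Prod>i\<in>S. y i) * (\<Prod>i\<in>V - S. 1 - y i) * f (\<lambda>i. if i \<in> S then 1 else 0))"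

definition partial :: "nat \<Rightarrow> ((nat \<Rightarrow> real) \<Rightarrow> real) \<Rightarrow> (nat \<Rightarrow> real) \<Rightarrow> real" where
  "partial i F y = deriv (\<lambda>t. F (y(i := t))) (y i)"

definition poly_grad_est :: "mpoly \<Rightarrow> nat \<Rightarrow> (nat \<Rightarrow> real) \<Rightarrow> real" where
  "poly_grad_est p i y = multilin_eval p (y(i := 1)) - multilin_eval p (y(i := 0))"

end

theory Submission
  imports Defs
begin

definition gd :: "nat \<Rightarrow> real \<Rightarrow> real" where
  "gd m s = (if m = 0 then ln (1 + s) else (-1)^(m-1) * fact (m-1) / (1 + s)^m)"

lemma gd_deriv:
  assumes "s > -1"
  shows "(gd m has_field_derivative gd (Suc m) s) (at s)"
proof (cases "m = 0")
  case True
  have "((\<lambda>s. ln (1 + s)) has_field_derivative 1 / (1 + s)) (at s)"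
    using assms by (auto intro!: derivative_eq_intros)
  then show ?thesis using True by (simp add: gd_def[abs_def])
next
  case False
  then obtain k where m: "m = Suc k" by (cases m) auto
  have ne: "1 + s \<noteq> 0" using assms by simp
  define u where "u = 1 + s"
  have ne: "u \<noteq> 0" using assms by (simp add: u_def)
  define c :: real where "c = (-1)^k * fact k"
  have dg: "((\<lambda>s. (1 + s)^(Suc k)) has_field_derivative real (Suc k) * u^k) (at s)"
  proof -
    have kk: "real k * (1+s)^(k - Suc 0) * (1+s) = real k * (1+s)^k" by (cases k) auto
    show ?thesis unfolding u_def
      apply (auto intro!: derivative_eq_intros)
      using kk by (simp add: algebra_simps)
  qed
  have dc: "((\<lambda>s. c) has_field_derivative 0) (at s)" by simp
  have "((\<lambda>s. c / (1 + s)^(Suc k)) has_field_derivative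
        (0 * u^(Suc k) - real (Suc k) * u^k * c) / (u^(Suc k))^Suc (Suc 0)) (at s)"
    using DERIV_quotient[OF dc dg] ne unfolding u_def by simp
  moreover have "(0 * u^(Suc k) - real (Suc k) * u^k * c) / (u^(Suc k))^Suc (Suc 0)
      = (-1)^(Suc k) * fact (Suc k) / u^(Suc (Suc k))"
  proof -
    have "(u^(Suc k))^Suc (Suc 0) = u^k * u^(Suc (Suc k))"
      by (simp add: power_add[symmetric] power_mult[symmetric])
    then have "(0 * u^(Suc k) - real (Suc k) * u^k * c) / (u^(Suc k))^Suc (Suc 0)
        = (u^k * (- real (Suc k) * c)) / (u^k * u^(Suc (Suc k)))" using ne by (simp add: field_simps)
    also have "\<dots> = (- real (Suc k) * c) / u^(Suc (Suc k))"
      using ne by (simp add: mult_divide_mult_cancel_left)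
    also have "- real (Suc k) * c = (-1)^(Suc k) * fact (Suc k)"
      unfolding c_def by (simp add: fact_Suc algebra_simps)
    finally show ?thesis .
  qed
  ultimately have "((\<lambda>s. c / (1 + s)^(Suc k)) has_field_derivative
        (-1)^(Suc k) * fact (Suc k) / (1 + s)^(Suc (Suc k))) (at s)" by (simp add: u_def)
  then show ?thesis using m by (simp add: gd_def[abs_def] c_def)
qed

lemma deriv_iter_h: "s > -1 \<Longrightarrow> (deriv ^^ m) h s = gd m s"
proof (induction m arbitrary: s)
  case 0
  then show ?case by (simp add: h_def gd_def)
next
  case (Suc m)
  have ev: "eventually (\<lambda>x. (deriv ^^ m) h x = gd m x) (nhds s)"
    using eventually_mono[OF eventually_nhds_in_open[of "{-1<..}" s]] Suc.prems Suc.IH by auto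
  then show ?case
    apply (simp add: deriv_cong_ev[OF ev refl])
    using gd_deriv[OF Suc.prems] DERIV_imp_deriv by blast
qed

lemma deriv_iter_has:
  assumes "s > -1" shows "((deriv ^^ m) h has_field_derivative (deriv ^^ Suc m) h s) (at s)"
proof -
  have "(gd m has_field_derivative gd (Suc m) s) (at s)" using gd_deriv assms .
  then have "((deriv ^^ m) h has_field_derivative gd (Suc m) s) (at s)"
    by (rule has_field_derivative_transform_within_open[of _ _ _ "{-1<..}"])
       (use assms deriv_iter_h in auto)
  then show ?thesis using deriv_iter_h[OF assms, of "Suc m"] by simp
qed

lemma taylor_bound:
  assumes "0 \<le> s" "s \<le> 1"
  shows "\<bar>h s - h_hat L s\<bar> \<le> 1 / (real (L+1) * 2^(L+1))"
proof (cases "s = 1/2")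
  case True
  have "h_hat L s = taylor_coeff 0"
    unfolding h_hat_def True by (simp add: sum.atLeast_Suc_atMost zero_power)
  then have "h s - h_hat L s = 0" by (simp add: taylor_coeff_def True)
  then show ?thesis by simp
next
  case False
  obtain t where t: "(if s < 1/2 then s < t \<and> t < 1/2 else 1/2 < t \<and> t < s)"
    and eq: "h s = (\<Sum>m<L+1. ((deriv ^^ m) h (1/2) / fact m) * (s - 1/2)^m)
               + ((deriv ^^ (L+1)) h t / fact (L+1)) * (s - 1/2)^(L+1)"
    using Taylor[of "L+1" "\<lambda>m. (deriv ^^ m) h" h 0 1 "1/2" s] assms False deriv_iter_has
    by fastforce
  have t0: "0 < t" using t assms by (auto split: if_splits)
  have hh: "h_hat L s = (\<Sum>m<L+1. ((deriv ^^ m) h (1/2) / fact m) * (s - 1/2)^m)"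
    unfolding h_hat_def taylor_coeff_def
    by (metis Suc_eq_plus1 atLeast0AtMost lessThan_Suc_atMost)
  have "h s - h_hat L s = ((deriv ^^ (L+1)) h t / fact (L+1)) * (s - 1/2)^(L+1)"
    using eq hh by simp
  also have "(deriv ^^ (L+1)) h t = (-1)^L * fact L / (1+t)^(L+1)"
    using deriv_iter_h[of t "L+1"] t0 by (simp add: gd_def)
  finally have e: "\<bar>h s - h_hat L s\<bar> = fact L / fact (L+1) / (1+t)^(L+1) * \<bar>s - 1/2\<bar>^(L+1)"
    using t0 by (simp add: abs_mult power_abs abs_divide)
  have f: "fact L / fact (L+1) = 1 / (real (L+1) :: real)"
    by (simp add: fact_Suc field_simps del: of_nat_Suc)
  have p1: "1 / (1+t)^(L+1) \<le> (1::real)"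
  proof -
    have "1 \<le> (1+t)^(L+1)" using t0 by (intro one_le_power) auto
    then show ?thesis by simp
  qed
  have p2: "\<bar>s - 1/2\<bar>^(L+1) \<le> (1/2)^(L+1)"
  proof (rule power_mono)
    show "\<bar>s - 1/2\<bar> \<le> 1/2" using assms by (auto simp: abs_if)
  qed simp
  have "\<bar>h s - h_hat L s\<bar> = 1 / real (L+1) * (1 / (1+t)^(L+1)) * \<bar>s - 1/2\<bar>^(L+1)"
    using e f by simp
  also have "\<dots> \<le> 1 / real (L+1) * 1 * (1/2)^(L+1)"
    using p1 p2 t0 by (intro mult_mono) auto
  also have "\<dots> = 1 / (real (L+1) * 2^(L+1))" by (simp add: power_divide)
  finally show ?thesis .
qed


definition ind :: "nat set \<Rightarrow> nat \<Rightarrow> real" where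
  "ind S = (\<lambda>i. if i \<in> S then 1 else 0)"

lemma ml_add: "multilin_eval (p + q) y = multilin_eval p y + multilin_eval q y"
  unfolding multilin_eval_def
  by (rule setsum_keys_plus_distrib) (auto simp: algebra_simps)

lemma ml_zero[simp]: "multilin_eval 0 y = 0"
  by (simp add: multilin_eval_def)

lemma ml_uminus: "multilin_eval (- p) y = - multilin_eval p y"
  by (simp add: multilin_eval_def sum_negf)

lemma ml_diff: "multilin_eval (p - q) y = multilin_eval p y - multilin_eval q y"
  using ml_add[of p "-q" y] ml_uminus[of q y] by simp

lemma ml_sum: "multilin_eval (\<Sum>j\<in>A. p j) y = (\<Sum>j\<in>A. multilin_eval (p j) y)"
  by (induction A rule: infinite_finite_induct) (auto simp: ml_add)

lemma ml_single: "multilin_eval (Poly_Mapping.single m c) y = c * (\<Prod>i\<in>Poly_Mapping.keys m. y i)"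
  by (simp add: multilin_eval_def)

lemma pm_expand: "p = (\<Sum>a\<in>Poly_Mapping.keys p. Poly_Mapping.single a (Poly_Mapping.lookup p a))"
proof (rule poly_mapping_eqI)
  fix k
  show "Poly_Mapping.lookup p k = Poly_Mapping.lookup (\<Sum>a\<in>Poly_Mapping.keys p. Poly_Mapping.single a (Poly_Mapping.lookup p a)) k"
    by (cases "k \<in> Poly_Mapping.keys p")
       (auto simp: lookup_sum lookup_single when_def in_keys_iff)
qed

lemma keys_add_nat: "Poly_Mapping.keys (a + b :: nat \<Rightarrow>\<^sub>0 nat) = Poly_Mapping.keys a \<union> Poly_Mapping.keys b"
  by (auto simp: in_keys_iff lookup_add)

lemma prod_ind: "finite K \<Longrightarrow> (\<Prod>i\<in>K. ind S i) = (if K \<subseteq> S then 1 else 0)"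
proof (cases "K \<subseteq> S")
  case True
  then show ?thesis by (auto simp: ind_def intro!: prod.neutral)
next
  case False
  then obtain i where "i \<in> K" "i \<notin> S" by auto
  moreover assume "finite K"
  ultimately show ?thesis using False by (auto simp: ind_def prod_zero_iff)
qed

lemma ml_mult_bool:
  "multilin_eval (p * q) (ind S) = multilin_eval p (ind S) * multilin_eval q (ind S)"
proof -
  let ?E = "\<lambda>p. multilin_eval p (ind S)"
  have "p * q = (\<Sum>a\<in>Poly_Mapping.keys p. \<Sum>b\<in>Poly_Mapping.keys q.
     Poly_Mapping.single a (Poly_Mapping.lookup p a) * Poly_Mapping.single b (Poly_Mapping.lookup q b))"
    by (subst pm_expand[of p], subst pm_expand[of q]) (simp add: sum_product)
  then have "?E (p * q) = (\<Sum>a\<in>Poly_Mapping.keys p. \<Sum>b\<in>Poly_Mapping.keys q.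
     Poly_Mapping.lookup p a * (\<Prod>i\<in>Poly_Mapping.keys a. ind S i) *
     (Poly_Mapping.lookup q b * (\<Prod>i\<in>Poly_Mapping.keys b. ind S i)))"
    by (auto simp: ml_sum mult_single ml_single keys_add_nat prod_ind intro!: sum.cong)
  also have "\<dots> = ?E p * ?E q"
    by (simp add: multilin_eval_def sum_product)
  finally show ?thesis .
qed

lemma ml_const: "multilin_eval (mp_const c) y = c"
  by (simp add: mp_const_def ml_single)

lemma ml_one: "multilin_eval 1 y = 1"
  using ml_const[of 1 y] by (simp add: mp_const_def)

lemma ml_var: "multilin_eval (mp_var i) y = y i"
  by (simp add: mp_var_def ml_single)

lemma ml_power_bool:
  "multilin_eval (p ^ l) (ind S) = multilin_eval p (ind S) ^ l"
  by (induction l) (simp_all add: ml_one ml_mult_bool)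

lemma ml_fhat_bool:
  "multilin_eval (f_hat_poly L J P r) (ind S) = (\<Sum>j=1..J. h_hat L (\<Sum>i\<in>P j. r i * ind S i))"
  unfolding f_hat_poly_def h_hat_def
  by (simp add: ml_sum ml_mult_bool ml_const ml_power_bool ml_diff ml_var)

definition vp :: "nat set \<Rightarrow> mpoly \<Rightarrow> bool" where
  "vp V p = (\<forall>m\<in>Poly_Mapping.keys p. Poly_Mapping.keys m \<subseteq> V)"

lemma vp_add: "vp V p \<Longrightarrow> vp V q \<Longrightarrow> vp V (p + q)"
  using keys_add[of p q] by (auto simp: vp_def)

lemma vp_diff: "vp V p \<Longrightarrow> vp V q \<Longrightarrow> vp V (p - q)"
  using keys_diff[of p q] by (auto simp: vp_def)

lemma vp_sum: "(\<And>j. j \<in> A \<Longrightarrow> vp V (p j)) \<Longrightarrow> vp V (\<Sum>j\<in>A. p j)"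
proof (induction A rule: infinite_finite_induct)
  case (insert x F)
  then show ?case by (simp add: vp_add)
qed (auto simp: vp_def)

lemma vp_mult: "vp V p \<Longrightarrow> vp V q \<Longrightarrow> vp V (p * q)"
  using keys_mult[of p q] by (force simp: vp_def keys_add_nat)

lemma vp_one: "vp V 1"
  by (simp add: vp_def)

lemma vp_power: "vp V p \<Longrightarrow> vp V (p ^ l)"
  by (induction l) (auto simp: vp_one vp_mult)

lemma vp_const: "vp V (mp_const c)"
  by (simp add: vp_def mp_const_def)

lemma vp_var: "i \<in> V \<Longrightarrow> vp V (mp_var i)"
  by (simp add: vp_def mp_var_def)

lemma vp_fhat:
  assumes "\<And>j. j \<in> {1..J} \<Longrightarrow> P j \<subseteq> V"
  shows "vp V (f_hat_poly L J P r)"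
  unfolding f_hat_poly_def
  using assms
  by (intro vp_sum vp_mult vp_const vp_power vp_diff vp_var) auto


definition wt :: "nat set \<Rightarrow> nat set \<Rightarrow> (nat \<Rightarrow> real) \<Rightarrow> real" where
  "wt V S y = (\<Prod>i\<in>S. y i) * (\<Prod>i\<in>V - S. 1 - y i)"

lemma relax_def': "multilinear_relaxation V f y = (\<Sum>S\<in>Pow V. wt V S y * f (ind S))"
  by (simp add: multilinear_relaxation_def ind_def wt_def)

lemma relax_insert:
  assumes "finite V" "i \<notin> V"
  shows "multilinear_relaxation (insert i V) f y =
     (\<Sum>S\<in>Pow V. wt V S y * (y i * f (ind (insert i S)) + (1 - y i) * f (ind S)))"
proof -
  have fin: "finite (Pow V)" using assms by simp
  have disj: "Pow V \<inter> insert i ` Pow V = {}" using assms by auto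
  have inj: "inj_on (insert i) (Pow V)"
    unfolding inj_on_def using assms by (metis PowD Set.set_insert insert_ident subsetD)
  have "multilinear_relaxation (insert i V) f y =
     (\<Sum>S\<in>Pow V. wt (insert i V) S y * f (ind S)) + (\<Sum>S\<in>insert i ` Pow V. wt (insert i V) S y * f (ind S))"
    unfolding relax_def' Pow_insert using fin disj by (simp add: sum.union_disjoint)
  also have "(\<Sum>S\<in>insert i ` Pow V. wt (insert i V) S y * f (ind S))
      = (\<Sum>S\<in>Pow V. wt (insert i V) (insert i S) y * f (ind (insert i S)))"
    using inj by (simp add: sum.reindex)
  also have "(\<Sum>S\<in>Pow V. wt (insert i V) (insert i S) y * f (ind (insert i S)))
      = (\<Sum>S\<in>Pow V. wt V S y * (y i * f (ind (insert i S))))"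
  proof (rule sum.cong[OF refl])
    fix S assume S: "S \<in> Pow V"
    then have iS: "i \<notin> S" using assms by auto
    have fS: "finite S" using S assms finite_subset by auto
    have "insert i V - insert i S = V - S" using assms by auto
    then show "wt (insert i V) (insert i S) y * f (ind (insert i S)) = wt V S y * (y i * f (ind (insert i S)))"
      using iS fS by (simp add: wt_def)
  qed
  also have "(\<Sum>S\<in>Pow V. wt (insert i V) S y * f (ind S))
      = (\<Sum>S\<in>Pow V. wt V S y * ((1 - y i) * f (ind S)))"
  proof (rule sum.cong[OF refl])
    fix S assume S: "S \<in> Pow V"
    then have iS: "i \<notin> S" using assms by auto
    have "insert i V - S = insert i (V - S)" using iS by auto
    moreover have "finite (V - S)" using assms by auto
    moreover have "i \<notin> V - S" using assms by auto
    ultimately show "wt (insert i V) S y * f (ind S) = wt V S y * ((1 - y i) * f (ind S))"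
      by (simp add: wt_def)
  qed
  finally have "multilinear_relaxation (insert i V) f y =
     (\<Sum>S\<in>Pow V. wt V S y * ((1 - y i) * f (ind S))) + (\<Sum>S\<in>Pow V. wt V S y * (y i * f (ind (insert i S))))" .
  then show ?thesis by (simp add: sum.distrib[symmetric] distrib_left add.commute)
qed

lemma relax_monomial:
  assumes "finite V" "K \<subseteq> V"
  shows "multilinear_relaxation V (\<lambda>x. \<Prod>k\<in>K. x k) y = (\<Prod>k\<in>K. y k)"
  using assms
proof (induction V arbitrary: K rule: finite_induct)
  case empty
  then show ?case by (simp add: relax_def' wt_def)
next
  case (insert i V)
  have fK: "finite K" using insert finite_subset by blast
  have fK': "finite (K - {i})" using fK by simp
  show ?case
  proof (cases "i \<in> K")
    case True
    have "multilinear_relaxation (insert i V) (\<lambda>x. \<Prod>k\<in>K. x k) y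
       = (\<Sum>S\<in>Pow V. wt V S y * (y i * (\<Prod>k\<in>K - {i}. ind S k)))"
      unfolding relax_insert[OF insert(1,2)]
    proof (rule sum.cong[OF refl])
      fix S assume "S \<in> Pow V"
      then have iS: "i \<notin> S" using insert by auto
      have "(K \<subseteq> insert i S) = (K - {i} \<subseteq> S)" by auto
      moreover have "\<not> K \<subseteq> S" using True iS by auto
      ultimately show "wt V S y * (y i * (\<Prod>k\<in>K. ind (insert i S) k) + (1 - y i) * (\<Prod>k\<in>K. ind S k))
         = wt V S y * (y i * (\<Prod>k\<in>K - {i}. ind S k))"
        using fK fK' by (simp add: prod_ind)
    qed
    also have "\<dots> = y i * multilinear_relaxation V (\<lambda>x. \<Prod>k\<in>K - {i}. x k) y"
      by (simp add: relax_def' sum_distrib_left algebra_simps)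
    also have "\<dots> = y i * (\<Prod>k\<in>K - {i}. y k)"
      using insert.IH[of "K - {i}"] insert.prems by auto
    also have "\<dots> = (\<Prod>k\<in>K. y k)"
      using True fK by (simp add: prod.remove)
    finally show ?thesis .
  next
    case False
    have "multilinear_relaxation (insert i V) (\<lambda>x. \<Prod>k\<in>K. x k) y
       = (\<Sum>S\<in>Pow V. wt V S y * (\<Prod>k\<in>K. ind S k))"
      unfolding relax_insert[OF insert(1,2)]
    proof (rule sum.cong[OF refl])
      fix S assume "S \<in> Pow V"
      have "(K \<subseteq> insert i S) = (K \<subseteq> S)" using False by auto
      then show "wt V S y * (y i * (\<Prod>k\<in>K. ind (insert i S) k) + (1 - y i) * (\<Prod>k\<in>K. ind S k))
         = wt V S y * (\<Prod>k\<in>K. ind S k)"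
        using fK by (simp add: prod_ind algebra_simps)
    qed
    also have "\<dots> = multilinear_relaxation V (\<lambda>x. \<Prod>k\<in>K. x k) y"
      by (simp add: relax_def')
    also have "\<dots> = (\<Prod>k\<in>K. y k)"
      using insert.IH[of K] insert.prems False by auto
    finally show ?thesis .
  qed
qed

lemma wt_sum: "finite V \<Longrightarrow> (\<Sum>S\<in>Pow V. wt V S y) = 1"
  using relax_monomial[of V "{}" y] by (simp add: relax_def')

lemma wt_nonneg: "S \<subseteq> V \<Longrightarrow> (\<forall>i\<in>V. 0 \<le> y i \<and> y i \<le> 1) \<Longrightarrow> 0 \<le> wt V S y"
  unfolding wt_def by (intro mult_nonneg_nonneg prod_nonneg) auto

lemma ml_relax:
  assumes "finite V" "vp V p"
  shows "multilin_eval p y = multilinear_relaxation V (multilin_eval p) y"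
proof -
  have "multilinear_relaxation V (multilin_eval p) y
      = (\<Sum>S\<in>Pow V. \<Sum>m\<in>Poly_Mapping.keys p. Poly_Mapping.lookup p m * (wt V S y * (\<Prod>i\<in>Poly_Mapping.keys m. ind S i)))"
    by (simp add: relax_def' multilin_eval_def sum_distrib_left algebra_simps)
  also have "\<dots> = (\<Sum>m\<in>Poly_Mapping.keys p. Poly_Mapping.lookup p m *
        multilinear_relaxation V (\<lambda>x. \<Prod>i\<in>Poly_Mapping.keys m. x i) y)"
    by (subst sum.swap) (simp add: relax_def' sum_distrib_left)
  also have "\<dots> = multilin_eval p y"
    unfolding multilin_eval_def
    using assms by (intro sum.cong refl arg_cong2[where f="(*)"] relax_monomial) (auto simp: vp_def)
  finally show ?thesis by simp
qed

lemma relax_affine: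
  assumes "finite V" "i \<in> V"
  shows "multilinear_relaxation V f (y(i := t)) =
     (\<Sum>S\<in>Pow (V - {i}). wt (V - {i}) S y * f (ind S)) +
     t * (\<Sum>S\<in>Pow (V - {i}). wt (V - {i}) S y * (f (ind (insert i S)) - f (ind S)))"
proof -
  have V: "V = insert i (V - {i})" using assms by auto
  have w: "wt (V - {i}) S (y(i := t)) = wt (V - {i}) S y" if "S \<in> Pow (V - {i})" for S
    using that unfolding wt_def by (intro arg_cong2[where f="(*)"] prod.cong) auto
  have "multilinear_relaxation V f (y(i := t)) =
     (\<Sum>S\<in>Pow (V - {i}). wt (V - {i}) S y * (t * f (ind (insert i S)) + (1 - t) * f (ind S)))"
    by (subst V, subst relax_insert) (use assms w in auto)
  also have "\<dots> = (\<Sum>S\<in>Pow (V - {i}). wt (V - {i}) S y * f (ind S) +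
      t * (wt (V - {i}) S y * (f (ind (insert i S)) - f (ind S))))"
    by (intro sum.cong refl) (simp add: algebra_simps)
  finally show ?thesis by (simp add: sum.distrib sum_distrib_left)
qed

lemma relax_partial:
  assumes "finite V" "i \<in> V"
  shows "partial i (multilinear_relaxation V f) y =
     multilinear_relaxation V f (y(i := 1)) - multilinear_relaxation V f (y(i := 0))"
proof -
  define B where "B = (\<Sum>S\<in>Pow (V - {i}). wt (V - {i}) S y * f (ind S))"
  define D where "D = (\<Sum>S\<in>Pow (V - {i}). wt (V - {i}) S y * (f (ind (insert i S)) - f (ind S)))"
  have eq: "(\<lambda>t. multilinear_relaxation V f (y(i := t))) = (\<lambda>t. B + t * D)"
    using relax_affine[OF assms] by (simp add: B_def D_def)
  have "((\<lambda>t. B + t * D) has_field_derivative D) (at (y i))"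
    by (auto intro!: derivative_eq_intros)
  then have "partial i (multilinear_relaxation V f) y = D"
    unfolding partial_def eq by (rule DERIV_imp_deriv)
  moreover have "multilinear_relaxation V f (y(i := 1)) - multilinear_relaxation V f (y(i := 0)) = D"
    using relax_affine[OF assms, of f y 1] relax_affine[OF assms, of f y 0] by (simp add: B_def D_def)
  ultimately show ?thesis by simp
qed


theorem theorem3:
  fixes n J L :: nat and P :: "nat \<Rightarrow> nat set" and r y :: "nat \<Rightarrow> real"
  assumes part_cover: "(\<Union>j\<in>{1..J}. P j) = {1..n}"
      and part_disj: "\<forall>j\<in>{1..J}. \<forall>k\<in>{1..J}. j \<noteq> k \<longrightarrow> P j \<inter> P k = {}"
      and part_ne: "\<forall>j\<in>{1..J}. P j \<noteq> {}"
      and r_range: "\<forall>i\<in>{1..n}. 0 \<le> r i \<and> r i \<le> 1"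
      and r_sum: "(\<Sum>i\<in>{1..n}. r i) = 1"
      and y_range: "\<forall>i\<in>{1..n}. 0 \<le> y i \<and> y i \<le> 1"
  shows "sqrt (\<Sum>i\<in>{1..n}.
            (partial i (multilinear_relaxation {1..n} (f_obj J P r)) y
             - poly_grad_est (f_hat_poly L J P r) i y)\<^sup>2)
         \<le> sqrt (real n) / (real (L + 1) * 2 ^ L)"
proof -
  define V where "V = {1..n}"
  define c :: real where "c = 1 / (real (L+1) * 2^(L+1))"
  define B :: real where "B = 1 / (real (L+1) * 2^L)"
  have B2c: "2 * c = B"
  proof -
    have "real (L+1) * 2^(L+1) = 2 * (real (L+1) * 2^L)" by simp
    then show ?thesis unfolding B_def c_def by simp
  qed
  have finV: "finite V" by (simp add: V_def)
  have PV: "P j \<subseteq> V" if "j \<in> {1..J}" for j using part_cover that V_def by auto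
  define s where "s = (\<lambda>j T. \<Sum>k\<in>P j. r k * ind T k)"
  have s_range: "0 \<le> s j T \<and> s j T \<le> 1" if j: "j \<in> {1..J}" for j T
  proof
    have rn: "0 \<le> r k" if "k \<in> P j" for k using PV[OF j] that r_range V_def by auto
    show "0 \<le> s j T" unfolding s_def using rn by (intro sum_nonneg) (auto simp: ind_def)
    have "s j T \<le> (\<Sum>k\<in>P j. r k)" unfolding s_def using rn by (intro sum_mono) (auto simp: ind_def)
    also have "\<dots> \<le> (\<Sum>k\<in>V. r k)"
      using PV[OF j] finV r_range V_def by (intro sum_mono2) auto
    finally show "s j T \<le> 1" using r_sum V_def by simp
  qed
  define e where "e = (\<lambda>x. h x - h_hat L x)"
  have e_bd: "\<bar>e x\<bar> \<le> c" if "0 \<le> x" "x \<le> 1" for x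
    using taylor_bound[OF that, of L] by (simp add: e_def c_def)
  define fh where "fh = f_hat_poly L J P r"
  define F where "F = f_obj J P r"
  define Dl where "Dl = (\<lambda>T. F (ind T) - multilin_eval fh (ind T))"
  have Dl_eq: "Dl T = (\<Sum>j=1..J. e (s j T))" for T
    unfolding Dl_def F_def fh_def ml_fhat_bool f_obj_def e_def s_def
    by (simp add: sum_subtractf)
  have vpfh: "vp V fh" unfolding fh_def using PV by (intro vp_fhat) auto
  have Dl_bd: "\<bar>Dl (insert i S) - Dl S\<bar> \<le> B" if i: "i \<in> V" and S: "S \<subseteq> V - {i}" for i S
  proof -
    have "i \<in> (\<Union>j\<in>{1..J}. P j)" using part_cover i V_def by simp
    then obtain j0 where j0: "j0 \<in> {1..J}" "i \<in> P j0" by blast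
    have same: "s j (insert i S) = s j S" if "j \<in> {1..J}" "j \<noteq> j0" for j
    proof -
      have "i \<notin> P j" using part_disj that j0 by blast
      then show ?thesis unfolding s_def by (intro sum.cong refl) (auto simp: ind_def)
    qed
    have "Dl (insert i S) - Dl S = (\<Sum>j=1..J. e (s j (insert i S)) - e (s j S))"
      by (simp add: Dl_eq sum_subtractf)
    also have "\<dots> = e (s j0 (insert i S)) - e (s j0 S)"
      using j0 same by (subst sum.remove[of _ j0]) (auto intro!: sum.neutral)
    finally have "\<bar>Dl (insert i S) - Dl S\<bar> \<le> \<bar>e (s j0 (insert i S))\<bar> + \<bar>e (s j0 S)\<bar>" by simp
    also have "\<dots> \<le> c + c" using e_bd s_range[OF j0(1)] by (intro add_mono) auto
    finally show ?thesis using B2c by simp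
  qed
  have coord: "\<bar>partial i (multilinear_relaxation V F) y - poly_grad_est fh i y\<bar> \<le> B"
    if i: "i \<in> V" for i
  proof -
    let ?W = "Pow (V - {i})"
    let ?w = "\<lambda>S. wt (V - {i}) S y"
    have "partial i (multilinear_relaxation V F) y
        = (\<Sum>S\<in>?W. ?w S * (F (ind (insert i S)) - F (ind S)))"
      using relax_partial[OF finV i] relax_affine[OF finV i, of F y 1] relax_affine[OF finV i, of F y 0]
      by simp
    moreover have "poly_grad_est fh i y
        = (\<Sum>S\<in>?W. ?w S * (multilin_eval fh (ind (insert i S)) - multilin_eval fh (ind S)))"
      unfolding poly_grad_est_def
      using ml_relax[OF finV vpfh] relax_affine[OF finV i, of "multilin_eval fh" y 1]
        relax_affine[OF finV i, of "multilin_eval fh" y 0]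
      by simp
    ultimately have "partial i (multilinear_relaxation V F) y - poly_grad_est fh i y
        = (\<Sum>S\<in>?W. ?w S * (Dl (insert i S) - Dl S))"
      by (simp add: Dl_def sum_subtractf[symmetric] algebra_simps)
    also have "\<bar>\<dots>\<bar> \<le> (\<Sum>S\<in>?W. \<bar>?w S * (Dl (insert i S) - Dl S)\<bar>)" by (rule sum_abs)
    also have "\<dots> \<le> (\<Sum>S\<in>?W. ?w S * B)"
    proof (rule sum_mono)
      fix S assume S: "S \<in> ?W"
      have w0: "0 \<le> ?w S" using S y_range V_def by (intro wt_nonneg) auto
      have "\<bar>?w S * (Dl (insert i S) - Dl S)\<bar> = ?w S * \<bar>Dl (insert i S) - Dl S\<bar>"
        using w0 by (simp add: abs_mult)
      also have "\<dots> \<le> ?w S * B" using w0 Dl_bd[OF i] S by (intro mult_left_mono) auto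
      finally show "\<bar>?w S * (Dl (insert i S) - Dl S)\<bar> \<le> ?w S * B" .
    qed
    also have "\<dots> = B" using wt_sum[of "V - {i}" y] finV by (simp add: sum_distrib_right[symmetric])
    finally show ?thesis .
  qed
  have B0: "0 \<le> B" by (simp add: B_def)
  have "(\<Sum>i\<in>V. (partial i (multilinear_relaxation V F) y - poly_grad_est fh i y)\<^sup>2) \<le> (\<Sum>i\<in>V. B\<^sup>2)"
  proof (rule sum_mono)
    fix i assume "i \<in> V"
    then have "\<bar>partial i (multilinear_relaxation V F) y - poly_grad_est fh i y\<bar> \<le> \<bar>B\<bar>"
      using coord B0 by auto
    then show "(partial i (multilinear_relaxation V F) y - poly_grad_est fh i y)\<^sup>2 \<le> B\<^sup>2"
      by (simp add: abs_le_square_iff)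
  qed
  also have "\<dots> = real n * B\<^sup>2" by (simp add: V_def)
  finally have "sqrt (\<Sum>i\<in>V. (partial i (multilinear_relaxation V F) y - poly_grad_est fh i y)\<^sup>2)
      \<le> sqrt (real n * B\<^sup>2)" by (rule real_sqrt_le_mono)
  also have "\<dots> = sqrt (real n) * B" using B0 by (simp add: real_sqrt_mult)
  also have "\<dots> = sqrt (real n) / (real (L + 1) * 2 ^ L)" by (simp add: B_def)
  finally show ?thesis by (simp add: V_def F_def fh_def)
qed

end
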